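(* Let $n\ge3$ and order the letters $y_1<y_2<\cdots<y_n$. The rewriting system on words in $y_1,\dots,y_n$ with rules $y_iy_j\to y_jy_i$ for $j+2\le i\le n-1$ and $y_ny_k\to y_ky_n$ for $1\le k\le n-3$ (i.e. the presentation of $K^{\infty}_n$ with each relation oriented towards the length-lexicographically smaller side) is complete: every ambiguity is resolvable, so every element of $K^{\infty}_n$ has a unique irreducible representative word.
   Context: $K^{\infty}_n=\langle y_1,\dots,y_n\mid y_iy_j=y_jy_i\ (j+2\le i\le n-1),\ y_ny_k=y_ky_n\ (1\le k\le n-3)\rangle$. A presentation/rewriting system is complete if it is terminating and all (overlap) ambiguities can be resolved to a common word. *)

theory Defs
  imports Main
begin

text \<open>Letters y_1,...,y_n are encoded as natural numbers 1..n, ordered by the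
usual order on nat; words are lists of letters.\<close>

definition alph_word :: "nat \<Rightarrow> nat list \<Rightarrow> bool" where
  "alph_word n w \<longleftrightarrow> set w \<subseteq> {1..n}"

definition Kinf_rule :: "nat \<Rightarrow> nat \<Rightarrow> nat \<Rightarrow> bool" where
  "Kinf_rule n i j \<longleftrightarrow>
     (1 \<le> j \<and> j + 2 \<le> i \<and> i \<le> n - 1) \<or> (i = n \<and> 1 \<le> j \<and> j \<le> n - 3)"

definition Kinf_step :: "nat \<Rightarrow> (nat list \<times> nat list) set" where
  "Kinf_step n = {(u @ [i, j] @ v, u @ [j, i] @ v) | u v i j.
      alph_word n u \<and> alph_word n v \<and> Kinf_rule n i j}"

definition terminating :: "('a \<times> 'a) set \<Rightarrow> bool" where
  "terminating R \<longleftrightarrow> wf (R\<inverse>)"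

definition confluent :: "('a \<times> 'a) set \<Rightarrow> bool" where
  "confluent R \<longleftrightarrow> (\<forall>a b c. (a, b) \<in> R\<^sup>* \<and> (a, c) \<in> R\<^sup>* \<longrightarrow>
       (\<exists>d. (b, d) \<in> R\<^sup>* \<and> (c, d) \<in> R\<^sup>*))"

definition locally_confluent :: "('a \<times> 'a) set \<Rightarrow> bool" where
  "locally_confluent R \<longleftrightarrow> (\<forall>a b c. (a, b) \<in> R \<and> (a, c) \<in> R \<longrightarrow>
       (\<exists>d. (b, d) \<in> R\<^sup>* \<and> (c, d) \<in> R\<^sup>*))"

definition complete :: "('a \<times> 'a) set \<Rightarrow> bool" where
  "complete R \<longleftrightarrow> terminating R \<and> confluent R"

definition irreducible :: "('a \<times> 'a) set \<Rightarrow> 'a \<Rightarrow> bool" where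
  "irreducible R a \<longleftrightarrow> (\<nexists>b. (a, b) \<in> R)"

end

theory Submission
  imports Defs
begin

definition sw :: "nat list \<Rightarrow> nat \<Rightarrow> nat list" where
  "sw a p = a[p := a!Suc p, Suc p := a!p]"

lemma rule_range: "Kinf_rule n i j \<Longrightarrow> 1 \<le> j \<and> j < i \<and> i \<le> n \<and> 1 \<le> i"
  unfolding Kinf_rule_def by auto

lemma rule_trans: "Kinf_rule n x y \<Longrightarrow> Kinf_rule n y z \<Longrightarrow> Kinf_rule n x z"
  unfolding Kinf_rule_def by auto

lemma split3: "Suc p < length a \<Longrightarrow> a = take p a @ [a!p, a!Suc p] @ drop (Suc (Suc p)) a"
  by (metis Cons_nth_drop_Suc Suc_lessD append_Cons append_Nil append_take_drop_id)

lemma sw_split: "Suc p < length a \<Longrightarrow> sw a p = take p a @ [a!Suc p, a!p] @ drop (Suc (Suc p)) a"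
proof -
  assume p: "Suc p < length a"
  obtain T x y D where e: "a = T @ [x, y] @ D" and l: "length T = p"
    using split3[OF p] p by (metis length_take min_absorb2 less_imp_le_nat Suc_lessD)
  have "a ! p = x" "a ! Suc p = y" using e l by (auto simp: nth_append)
  moreover have "take p a = T" "drop (Suc (Suc p)) a = D" using e l by auto
  ultimately show ?thesis unfolding sw_def using e l by (simp add: list_update_append)
qed

lemma step_char: "(a, b) \<in> Kinf_step n \<longleftrightarrow>
  alph_word n a \<and> (\<exists>p. Suc p < length a \<and> Kinf_rule n (a!p) (a!Suc p) \<and> b = sw a p)"
proof
  assume "(a, b) \<in> Kinf_step n"
  then obtain u v i j where a: "a = u @ [i, j] @ v" and b: "b = u @ [j, i] @ v"
    and u: "alph_word n u" and v: "alph_word n v" and r: "Kinf_rule n i j"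
    unfolding Kinf_step_def by blast
  have "alph_word n a" using u v rule_range[OF r] a unfolding alph_word_def by auto
  moreover have "Suc (length u) < length a" using a by simp
  moreover have "a ! length u = i" using a by (auto simp: nth_append)
  moreover have "a ! Suc (length u) = j" using a by (simp add: nth_append)
  moreover have "b = sw a (length u)" using a b unfolding sw_def by (simp add: list_update_append nth_append)
  ultimately show "alph_word n a \<and> (\<exists>p. Suc p < length a \<and> Kinf_rule n (a!p) (a!Suc p) \<and> b = sw a p)"
    using r by metis
next
  assume "alph_word n a \<and> (\<exists>p. Suc p < length a \<and> Kinf_rule n (a!p) (a!Suc p) \<and> b = sw a p)"
  then obtain p where al: "alph_word n a" and p: "Suc p < length a" and r: "Kinf_rule n (a!p) (a!Suc p)"
    and b: "b = sw a p" by blast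
  have "alph_word n (take p a)" "alph_word n (drop (Suc (Suc p)) a)"
    using al unfolding alph_word_def by (auto dest: in_set_takeD in_set_dropD)
  then show "(a, b) \<in> Kinf_step n"
    unfolding Kinf_step_def using split3[OF p] sw_split[OF p] b r by blast
qed

(* termination via inversion count *)
fun ninv :: "nat list \<Rightarrow> nat" where
  "ninv [] = 0"
| "ninv (x # xs) = length (filter (\<lambda>y. y < x) xs) + ninv xs"

lemma inv_append: "ninv (u @ w) = ninv u + ninv w + (\<Sum>x\<leftarrow>u. length (filter (\<lambda>y. y < x) w))"
  by (induction u) auto

lemma inv_step: "j < i \<Longrightarrow> ninv (u @ [j, i] @ v) < ninv (u @ [i, j] @ v)"
proof -
  assume "j < i"
  have e: "length (filter P ([j, i] @ v)) = length (filter P ([i, j] @ v))" for P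
    by auto
  show ?thesis unfolding inv_append e using \<open>j < i\<close> by auto
qed

lemma step_inv: "(a, b) \<in> Kinf_step n \<Longrightarrow> ninv b < ninv a"
  unfolding Kinf_step_def using inv_step rule_range by blast

lemma kterm: "terminating (Kinf_step n)"
  unfolding terminating_def
proof (rule wf_subset[OF wf_measure[of ninv]])
  show "(Kinf_step n)\<inverse> \<subseteq> measure ninv" using step_inv by auto
qed

lemma len_sw[simp]: "length (sw a p) = length a" unfolding sw_def by simp

lemma nth_sw: "Suc p < length a \<Longrightarrow> sw a p ! k = (if k = p then a!Suc p else if k = Suc p then a!p else a!k)"
  unfolding sw_def by (auto simp: nth_list_update)

lemma alph_sw: "alph_word n a \<Longrightarrow> Suc p < length a \<Longrightarrow> alph_word n (sw a p)"
  unfolding alph_word_def sw_def by (auto simp: set_update_subsetI)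

lemma step_at: "alph_word n a \<Longrightarrow> Suc p < length a \<Longrightarrow> Kinf_rule n (a!p) (a!Suc p) \<Longrightarrow> (a, sw a p) \<in> Kinf_step n"
  unfolding step_char by blast

lemma lc: "locally_confluent (Kinf_step n)"
  unfolding locally_confluent_def
proof (intro allI impI)
  fix a b c assume "(a, b) \<in> Kinf_step n \<and> (a, c) \<in> Kinf_step n"
  then obtain p q where al: "alph_word n a" and p: "Suc p < length a" and rp: "Kinf_rule n (a!p) (a!Suc p)"
    and b: "b = sw a p" and q: "Suc q < length a" and rq: "Kinf_rule n (a!q) (a!Suc q)" and c: "c = sw a q"
    unfolding step_char by blast
  have sym: "\<exists>d. (b, d) \<in> (Kinf_step n)\<^sup>* \<and> (c, d) \<in> (Kinf_step n)\<^sup>*"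
    if al: "alph_word n a" and p: "Suc p < length a" and rp: "Kinf_rule n (a!p) (a!Suc p)"
    and b: "b = sw a p" and q: "Suc q < length a" and rq: "Kinf_rule n (a!q) (a!Suc q)" and c: "c = sw a q"
    and pq: "p < q" for a b c p q
  proof (cases "q = Suc p")
    case True
    then have q2: "Suc (Suc p) < length a" using q by simp
    have rq2: "Kinf_rule n (a!Suc p) (a!Suc (Suc p))" using rq True by simp
    have rt: "Kinf_rule n (a!p) (a!Suc (Suc p))" using rule_trans[OF rp rq2] .
    have alb: "alph_word n b" using al p b alph_sw by simp
    have alc: "alph_word n c" using al q c alph_sw by simp
    let ?d = "sw (sw c p) (Suc p)"
    have st1: "(b, sw b (Suc p)) \<in> Kinf_step n"
      by (rule step_at[OF alb]) (use p q2 b rt in \<open>simp_all add: nth_sw\<close>)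
    have st2: "(sw b (Suc p), sw (sw b (Suc p)) p) \<in> Kinf_step n"
      by (rule step_at) (use alb p q2 b rq2 in \<open>simp_all add: nth_sw alph_sw\<close>)
    have st3: "(c, sw c p) \<in> Kinf_step n"
      by (rule step_at[OF alc]) (use p q2 c rt True in \<open>simp_all add: nth_sw\<close>)
    have st4: "(sw c p, ?d) \<in> Kinf_step n"
      by (rule step_at) (use alc p q2 c rp True in \<open>simp_all add: nth_sw alph_sw\<close>)
    have eq: "sw (sw b (Suc p)) p = ?d"
      using p q2 b c True by (intro nth_equalityI) (simp_all add: nth_sw)
    show ?thesis using st1 st2 st3 st4 eq
      by (metis converse_rtrancl_into_rtrancl r_into_rtrancl)
  next
    case False
    have comm: "sw (sw a p) q = sw (sw a q) p"
      using p q pq False by (intro nth_equalityI) (simp_all add: nth_sw)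
    have alb: "alph_word n b" using al p b alph_sw by simp
    have alc: "alph_word n c" using al q c alph_sw by simp
    have st1: "(b, sw b q) \<in> Kinf_step n"
      by (rule step_at[OF alb]) (use p q b False pq rq in \<open>simp_all add: nth_sw\<close>)
    have st2: "(c, sw c p) \<in> Kinf_step n"
      by (rule step_at[OF alc]) (use p q c False pq rp in \<open>simp_all add: nth_sw\<close>)
    show ?thesis using st1 st2 comm b c by (metis r_into_rtrancl)
  qed
  show "\<exists>d. (b, d) \<in> (Kinf_step n)\<^sup>* \<and> (c, d) \<in> (Kinf_step n)\<^sup>*"
  proof (cases p q rule: linorder_cases)
    case less then show ?thesis using sym[OF al p rp b q rq c] by blast
  next
    case equal then show ?thesis using b c by auto
  next
    case greater then show ?thesis using sym[OF al q rq c p rp b] by blast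
  qed
qed

lemma newman:
  assumes t: "terminating R" and l: "locally_confluent R"
  shows "confluent R"
proof -
  have "\<forall>b c. (a, b) \<in> R\<^sup>* \<and> (a, c) \<in> R\<^sup>* \<longrightarrow> (\<exists>d. (b, d) \<in> R\<^sup>* \<and> (c, d) \<in> R\<^sup>*)" for a
    using t[unfolded terminating_def]
  proof (induction a rule: wf_induct_rule)
    case (less a)
    show ?case
    proof (intro allI impI)
      fix b c assume bc: "(a, b) \<in> R\<^sup>* \<and> (a, c) \<in> R\<^sup>*"
      show "\<exists>d. (b, d) \<in> R\<^sup>* \<and> (c, d) \<in> R\<^sup>*"
      proof (cases "a = b")
        case True then show ?thesis using bc by blast
      next
        case nb: False
        then obtain b1 where ab1: "(a, b1) \<in> R" and b1b: "(b1, b) \<in> R\<^sup>*"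
          using bc by (meson converse_rtranclE)
        show ?thesis
        proof (cases "a = c")
          case True then show ?thesis using bc by blast
        next
          case False
          then obtain c1 where ac1: "(a, c1) \<in> R" and c1c: "(c1, c) \<in> R\<^sup>*"
            using bc by (meson converse_rtranclE)
          obtain e where b1e: "(b1, e) \<in> R\<^sup>*" and c1e: "(c1, e) \<in> R\<^sup>*"
            using l ab1 ac1 unfolding locally_confluent_def by blast
          have IHb: "\<forall>b c. (b1, b) \<in> R\<^sup>* \<and> (b1, c) \<in> R\<^sup>* \<longrightarrow> (\<exists>d. (b, d) \<in> R\<^sup>* \<and> (c, d) \<in> R\<^sup>*)"
            using less.IH ab1 by blast
          have IHc: "\<forall>b c. (c1, b) \<in> R\<^sup>* \<and> (c1, c) \<in> R\<^sup>* \<longrightarrow> (\<exists>d. (b, d) \<in> R\<^sup>* \<and> (c, d) \<in> R\<^sup>*)"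
            using less.IH ac1 by blast
          obtain f where bf: "(b, f) \<in> R\<^sup>*" and ef: "(e, f) \<in> R\<^sup>*"
            using IHb b1b b1e by blast
          have c1f: "(c1, f) \<in> R\<^sup>*" using c1e ef by (rule rtrancl_trans)
          obtain g where fg: "(f, g) \<in> R\<^sup>*" and cg: "(c, g) \<in> R\<^sup>*"
            using IHc c1c c1f by blast
          show ?thesis using bf fg cg by (meson rtrancl_trans)
        qed
      qed
    qed
  qed
  then show ?thesis unfolding confluent_def by blast
qed

lemma church_rosser:
  assumes "confluent R" and "(a, b) \<in> (R \<union> R\<inverse>)\<^sup>*"
  shows "\<exists>d. (a, d) \<in> R\<^sup>* \<and> (b, d) \<in> R\<^sup>*"
  using assms(2)
proof (induction rule: rtrancl_induct)
  case base then show ?case by blast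
next
  case (step y z)
  then obtain d where ad: "(a, d) \<in> R\<^sup>*" and yd: "(y, d) \<in> R\<^sup>*" by blast
  show ?case
  proof (cases "(y, z) \<in> R")
    case True
    then obtain e where "(d, e) \<in> R\<^sup>*" "(z, e) \<in> R\<^sup>*"
      using assms(1) yd unfolding confluent_def by (meson r_into_rtrancl)
    then show ?thesis using ad by (meson rtrancl_trans)
  next
    case False
    then have "(z, y) \<in> R" using step by auto
    then show ?thesis using ad yd by (meson converse_rtrancl_into_rtrancl)
  qed
qed

lemma irr_rtrancl: "irreducible R a \<Longrightarrow> (a, b) \<in> R\<^sup>* \<Longrightarrow> b = a"
  unfolding irreducible_def by (auto elim: converse_rtranclE)

lemma nf_exists:
  assumes "terminating R" shows "\<exists>v. (w, v) \<in> R\<^sup>* \<and> irreducible R v"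
  using assms[unfolded terminating_def]
proof (induction w rule: wf_induct_rule)
  case (less w)
  show ?case
  proof (cases "irreducible R w")
    case True then show ?thesis by blast
  next
    case False
    then obtain b where "(w, b) \<in> R" unfolding irreducible_def by blast
    moreover obtain v where "(b, v) \<in> R\<^sup>*" "irreducible R v" using less.IH \<open>(w, b) \<in> R\<close> by blast
    ultimately show ?thesis by (meson converse_rtrancl_into_rtrancl)
  qed
qed

theorem lemma1:
  fixes n :: nat
  assumes "n \<ge> 3"
  shows "complete (Kinf_step n) \<and> locally_confluent (Kinf_step n) \<and>
    (\<forall>w. alph_word n w \<longrightarrow>
       (\<exists>!v. (w, v) \<in> ((Kinf_step n) \<union> (Kinf_step n)\<inverse>)\<^sup>* \<and> irreducible (Kinf_step n) v))"
proof -
  have c: "confluent (Kinf_step n)" using newman[OF kterm lc] .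
  have u: "\<exists>!v. (w, v) \<in> ((Kinf_step n) \<union> (Kinf_step n)\<inverse>)\<^sup>* \<and> irreducible (Kinf_step n) v" for w
  proof -
    obtain v where wv: "(w, v) \<in> (Kinf_step n)\<^sup>*" and iv: "irreducible (Kinf_step n) v"
      using nf_exists[OF kterm] by blast
    have "(w, v) \<in> ((Kinf_step n) \<union> (Kinf_step n)\<inverse>)\<^sup>*"
      using wv rtrancl_mono[of "Kinf_step n" "Kinf_step n \<union> (Kinf_step n)\<inverse>"] by blast
    moreover have "v' = v" if "(w, v') \<in> ((Kinf_step n) \<union> (Kinf_step n)\<inverse>)\<^sup>*"
      and "irreducible (Kinf_step n) v'" for v'
    proof -
      have "(v, w) \<in> ((Kinf_step n) \<union> (Kinf_step n)\<inverse>)\<^sup>*"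
        using wv by (induction rule: rtrancl_induct) (auto intro: rtrancl_into_rtrancl[rotated] converse_rtrancl_into_rtrancl)
      then have "(v, v') \<in> ((Kinf_step n) \<union> (Kinf_step n)\<inverse>)\<^sup>*" using that(1) by (rule rtrancl_trans)
      then obtain d where "(v, d) \<in> (Kinf_step n)\<^sup>*" "(v', d) \<in> (Kinf_step n)\<^sup>*"
        using church_rosser[OF c] by blast
      then show ?thesis using iv that(2) irr_rtrancl by metis
    qed
    ultimately show ?thesis using iv by blast
  qed
  show ?thesis using c kterm lc u unfolding complete_def by blast
qed

end
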